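(* Let $\{\mathbf Z_i(n), i\in\mathbb N\}$ be a critical GWBP/$\infty$ with mean matrix $\mathbf M\in\mathcal M_1$ and $\mathbf F(\mathbf s)\neq\mathbf M\mathbf s$. For $i\in\mathbb N$ and $\mathbf s\in\mathbf S$ define $\epsilon_{2,i}(\mathbf 1-\mathbf s)$ by $$\sum_{j\in\mathbb N}M_{ij}(1-s_j)-\sum_{j\in\mathbb N}Q_{ij}(s_j)=M_i\,\epsilon_{2,i}(\mathbf 1-\mathbf s).$$ Then $$\lim_{\mathbf s\in\mathbf S,\ \|\mathbf 1-\mathbf s\|_\infty\to0}\ \sup_{i\in\mathbb N}\frac{|\epsilon_{2,i}(\mathbf 1-\mathbf s)|}{\|\mathbf 1-\mathbf s\|_\infty}=0.$$ Moreover, with $\epsilon_{2,i}(\mathbf Q(n-1;\mathbf s))$ defined by $$\sum_{j\in\mathbb N}M_{ij}Q_j(n-1;\mathbf s)-\sum_{j\in\mathbb N}Q_{ij}\big(F_j(n-1;\mathbf s)\big)=M_i\,\epsilon_{2,i}(\mathbf Q(n-1;\mathbf s)),$$ one has $$\lim_{n\to\infty}\sup_{\mathbf s\in\mathbf S,\ i\in\mathbb N}\frac{|\epsilon_{2,i}(\mathbf Q(n-1;\mathbf s))|}{\mathcal Q(n-1;\mathbf s)}=0.$$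
   Context: A GWBP/$\infty$ has types $\mathbb N=\{1,2,\dots\}$. Each particle lives one unit of time; a type-$i$ particle produces, independently of everything else, a random vector $\mathbf Z_i=(Z_{ij})_{j\in\mathbb N}$ of children, with $Z_i:=\sum_jZ_{ij}<\infty$ a.s. $\mathbf Z_i(n)=(Z_{ij}(n))_j$ is the generation-$n$ population from one type-$i$ particle. For $\mathbf s\in[0,1]^{\mathbb N}$: $F_i(n;\mathbf s)=\mathbb E\prod_js_j^{Z_{ij}(n)}$, $F_i(\mathbf s)=F_i(1;\mathbf s)$, $Q_i(n;\mathbf s)=1-F_i(n;\mathbf s)$, $\mathbf Q(n;\mathbf s)=(Q_i(n;\mathbf s))_i$, $\mathcal Q(n;\mathbf s)=\sup_iQ_i(n;\mathbf s)$, $Q_{ij}(s)=1-\mathbb Es^{Z_{ij}}$ for $s\in[0,1]$, $\|\mathbf 1-\mathbf s\|_\infty=\sup_j(1-s_j)$. $\mathbf S=\{\mathbf s\in[0,1]^{\mathbb N}:\mathbf s\neq\mathbf 1\}$. "$\mathbf F(\mathbf s)\neq\mathbf M\mathbf s$" means it is not true that $F_i(\mathbf s)=\sum_jM_{ij}s_j$ for all $i,\mathbf s$. Mean matrix $\mathbf M=(M_{ij})$, $M_{ij}=\mathbb EZ_{ij}$, $M^{(n)}_{ij}=\mathbb EZ_{ij}(n)$, $M_i=\sum_jM_{ij}=\mathbb EZ_i$. Irreducible: for all $i,j$ some $M^{(n)}_{ij}>0$; aperiodic: gcd of such $n$ is 1; then $\lim_n(M^{(n)}_{ij})^{1/n}=1/R$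 for a common $R$; critical: $R=1$. $\mathbf M\in\mathcal M_1$ means: (i) irreducible, aperiodic, $R=1$, 1-recurrent ($\sum_nM^{(n)}_{ij}=\infty$) and 1-positive ($\lim_nM^{(n)}_{ij}>0$ for all $i,j$); then there are positive eigenvectors $\mathbf v\mathbf M=\mathbf v$, $\mathbf M\mathbf u^T=\mathbf u^T$, unique up to positive multiples, normalized with $\sum_jv_ju_j=1$; (ii) $\sum_jv_j=1$ and $\sup_iu_i<\infty$; (iii) $\lim_{N\to\infty}\sup_iM_i^{-1}\sum_{j>N}M_{ij}=0$ and $\lim_{K\to\infty}\sup_iM_i^{-1}\mathbb E[Z_i;Z_i>K]=0$. *)

theory Defs
  imports "HOL-Probability.Probability"
begin

text \<open>Types are labelled by nat (relabelling of the paper's index set {1,2,...}).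
  An offspring law is P :: nat => (nat => nat) pmf; P i is the law of the
  offspring vector Z_i = (Z_ij)_j of a type-i particle.\<close>

type_synonym offspring = "nat \<Rightarrow> (nat \<Rightarrow> nat) pmf"

definition supp :: "(nat \<Rightarrow> nat) \<Rightarrow> nat set" where
  "supp z = {j. z j \<noteq> 0}"

definition tot :: "(nat \<Rightarrow> nat) \<Rightarrow> nat" where
  "tot z = (\<Sum>j\<in>supp z. z j)"

definition GWBP :: "offspring \<Rightarrow> bool" where
  "GWBP P \<longleftrightarrow> (\<forall>i. \<forall>z\<in>set_pmf (P i). finite (supp z))"

definition unit_cube :: "(nat \<Rightarrow> real) set" where
  "unit_cube = {s. \<forall>j. 0 \<le> s j \<and> s j \<le> 1}"

definition Sset :: "(nat \<Rightarrow> real) set" where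
  "Sset = unit_cube - {(\<lambda>_. 1)}"

definition genF :: "offspring \<Rightarrow> nat \<Rightarrow> (nat \<Rightarrow> real) \<Rightarrow> real" where
  "genF P i s = measure_pmf.expectation (P i) (\<lambda>z. \<Prod>j\<in>supp z. s j ^ z j)"

primrec genFn :: "offspring \<Rightarrow> nat \<Rightarrow> (nat \<Rightarrow> real) \<Rightarrow> nat \<Rightarrow> real" where
  "genFn P 0 s = s"
| "genFn P (Suc n) s = (\<lambda>i. genF P i (genFn P n s))"

definition Qn :: "offspring \<Rightarrow> nat \<Rightarrow> (nat \<Rightarrow> real) \<Rightarrow> nat \<Rightarrow> real" where
  "Qn P n s i = 1 - genFn P n s i"

definition calQ :: "offspring \<Rightarrow> nat \<Rightarrow> (nat \<Rightarrow> real) \<Rightarrow> real" where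
  "calQ P n s = (SUP i. Qn P n s i)"

definition Qij :: "offspring \<Rightarrow> nat \<Rightarrow> nat \<Rightarrow> real \<Rightarrow> real" where
  "Qij P i j x = 1 - measure_pmf.expectation (P i) (\<lambda>z. x ^ z j)"

definition norm_inf :: "(nat \<Rightarrow> real) \<Rightarrow> real" where
  "norm_inf s = (SUP j. 1 - s j)"

definition Menn :: "offspring \<Rightarrow> nat \<Rightarrow> nat \<Rightarrow> ennreal" where
  "Menn P i j = (\<integral>\<^sup>+ z. of_nat (z j) \<partial>measure_pmf (P i))"

definition Mij :: "offspring \<Rightarrow> nat \<Rightarrow> nat \<Rightarrow> real" where
  "Mij P i j = enn2real (Menn P i j)"

definition Mtot_enn :: "offspring \<Rightarrow> nat \<Rightarrow> ennreal" where
  "Mtot_enn P i = (\<integral>\<^sup>+ z. of_nat (tot z) \<partial>measure_pmf (P i))"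

definition Mtot :: "offspring \<Rightarrow> nat \<Rightarrow> real" where
  "Mtot P i = enn2real (Mtot_enn P i)"

primrec Mpow :: "offspring \<Rightarrow> nat \<Rightarrow> nat \<Rightarrow> nat \<Rightarrow> ennreal" where
  "Mpow P 0 i j = (if i = j then 1 else 0)"
| "Mpow P (Suc n) i j = (\<Sum>k. Menn P i k * Mpow P n k j)"

definition irreducible_M :: "offspring \<Rightarrow> bool" where
  "irreducible_M P \<longleftrightarrow> (\<forall>i j. \<exists>n\<ge>1. Mpow P n i j > 0)"

definition aperiodic_M :: "offspring \<Rightarrow> bool" where
  "aperiodic_M P \<longleftrightarrow> (\<forall>i. Gcd {n. n \<ge> 1 \<and> Mpow P n i i > 0} = 1)"

text \<open>Convergence parameter R = 1: lim_n (M^{(n)}_ij)^{1/n} = 1 (in [0,\<infinity>]; a limit 1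
  forces M^{(n)}_ij to be eventually finite).\<close>
definition R_one :: "offspring \<Rightarrow> bool" where
  "R_one P \<longleftrightarrow> (\<forall>i j. (\<forall>\<^sub>F n in sequentially. Mpow P n i j < \<infinity>) \<and>
      (\<lambda>n. root n (enn2real (Mpow P n i j))) \<longlonglongrightarrow> 1)"

definition one_recurrent :: "offspring \<Rightarrow> bool" where
  "one_recurrent P \<longleftrightarrow> (\<forall>i j. (\<Sum>n. Mpow P n i j) = \<infinity>)"

definition one_positive :: "offspring \<Rightarrow> bool" where
  "one_positive P \<longleftrightarrow> (\<forall>i j. \<exists>L::real. L > 0 \<and>
      (\<forall>\<^sub>F n in sequentially. Mpow P n i j < \<infinity>) \<and>
      (\<lambda>n. enn2real (Mpow P n i j)) \<longlonglongrightarrow> L)"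

definition left_eigen :: "offspring \<Rightarrow> (nat \<Rightarrow> real) \<Rightarrow> bool" where
  "left_eigen P v \<longleftrightarrow> (\<forall>j. (\<Sum>i. ennreal (v i) * Menn P i j) = ennreal (v j))"

definition right_eigen :: "offspring \<Rightarrow> (nat \<Rightarrow> real) \<Rightarrow> bool" where
  "right_eigen P u \<longleftrightarrow> (\<forall>i. (\<Sum>j. Menn P i j * ennreal (u j)) = ennreal (u i))"

text \<open>Condition (ii) is stated for
  the (unique up to scaling) positive eigenvectors normalised by sum_j v_j u_j = 1.
  Condition (iii) presupposes finite means M_i (the paper divides by M_i), made explicit.\<close>
definition M1 :: "offspring \<Rightarrow> bool" where
  "M1 P \<longleftrightarrow>
     irreducible_M P \<and> aperiodic_M P \<and> R_one P \<and> one_recurrent P \<and> one_positive P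
   \<and> (\<exists>v u. (\<forall>j. v j > 0) \<and> (\<forall>j. u j > 0) \<and> left_eigen P v \<and> right_eigen P u
        \<and> (\<lambda>j. v j * u j) sums 1
        \<and> v sums 1 \<and> bdd_above (range u))
   \<and> (\<forall>i. Mtot_enn P i < \<infinity>)
   \<and> (\<forall>e>0. \<exists>N0. \<forall>N\<ge>N0. \<forall>i. (\<Sum>k. Mij P i (k + N + 1)) / Mtot P i \<le> e)
   \<and> (\<forall>e>0. \<exists>K0. \<forall>K\<ge>K0. \<forall>i.
        enn2real (\<integral>\<^sup>+ z. of_nat (tot z) * indicator {z. tot z > K} z \<partial>measure_pmf (P i))
          / Mtot P i \<le> e)"

definition F_linear :: "offspring \<Rightarrow> bool" where
  "F_linear P \<longleftrightarrow> (\<forall>i. \<forall>s\<in>unit_cube. genF P i s = (\<Sum>j. Mij P i j * s j))"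

text \<open>eps_{2,i}(1 - s), defined by
  sum_j M_ij (1 - s_j) - sum_j Q_ij(s_j) = M_i eps_{2,i}(1 - s).
  Evaluated at s = F(n-1;s) this gives eps_{2,i}(Q(n-1;s)).\<close>
definition eps2 :: "offspring \<Rightarrow> nat \<Rightarrow> (nat \<Rightarrow> real) \<Rightarrow> real" where
  "eps2 P i s = ((\<Sum>j. Mij P i j * (1 - s j)) - (\<Sum>j. Qij P i j (s j))) / Mtot P i"

end

theory Submission
  imports Defs
begin


lemma ennsum_swap:
  fixes f :: "nat \<Rightarrow> nat \<Rightarrow> ennreal"
  shows "(\<Sum>i. \<Sum>j. f i j) = (\<Sum>j. \<Sum>i. f i j)"
proof -
  have "(\<Sum>i. \<Sum>j. f i j) = (\<integral>\<^sup>+ i. (\<Sum>j. f i j) \<partial>count_space UNIV)"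
    by (simp add: nn_integral_count_space_nat)
  also have "\<dots> = (\<Sum>j. \<integral>\<^sup>+ i. f i j \<partial>count_space UNIV)"
    by (rule nn_integral_suminf) simp
  also have "\<dots> = (\<Sum>j. \<Sum>i. f i j)"
    by (simp add: nn_integral_count_space_nat)
  finally show ?thesis .
qed

lemma pmf_integrable_bounded:
  fixes f :: "'a \<Rightarrow> real"
  assumes "\<And>z. z \<in> set_pmf p \<Longrightarrow> \<bar>f z\<bar> \<le> B"
  shows "integrable (measure_pmf p) f"
  by (rule measure_pmf.integrable_const_bound[where B=B]) (auto simp: AE_measure_pmf_iff assms)

lemma supp_finite: "GWBP P \<Longrightarrow> z \<in> set_pmf (P i) \<Longrightarrow> finite (supp z)"
  by (auto simp: GWBP_def)

lemma le_tot: "finite (supp z) \<Longrightarrow> z j \<le> tot z"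
  unfolding tot_def
  by (cases "j \<in> supp z") (auto simp: supp_def intro!: member_le_sum)

lemma tot_suminf: "finite (supp z) \<Longrightarrow> (\<Sum>j. (of_nat (z j) :: ennreal)) = of_nat (tot z)"
proof -
  assume f: "finite (supp z)"
  have "(\<Sum>j. (of_nat (z j) :: ennreal)) = (\<Sum>j\<in>supp z. of_nat (z j))"
    by (rule suminf_finite[OF f]) (auto simp: supp_def)
  then show ?thesis by (simp add: tot_def)
qed



lemma tot_integrable:
  assumes "Mtot_enn P i < \<infinity>"
  shows "integrable (measure_pmf (P i)) (\<lambda>z. real (tot z))"
  and "Mtot P i = (\<integral>z. real (tot z) \<partial>P i)"
proof -
  have e: "(\<integral>\<^sup>+ z. ennreal (real (tot z)) \<partial>P i) = Mtot_enn P i"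
    unfolding Mtot_enn_def by (simp only: ennreal_of_nat_eq_real_of_nat)
  obtain r where r: "Mtot_enn P i = ennreal r" "r \<ge> 0" using assms by (cases "Mtot_enn P i") auto
  show I: "integrable (measure_pmf (P i)) (\<lambda>z. real (tot z))"
  proof (rule integrableI_nn_integral_finite[where x=r])
    show "(\<integral>\<^sup>+ z. ennreal (real (tot z)) \<partial>P i) = ennreal r" using e r(1) by (rule trans)
    show "(\<lambda>z. real (tot z)) \<in> borel_measurable (measure_pmf (P i))" by simp
    show "AE x in measure_pmf (P i). 0 \<le> real (tot x)" by simp
  qed
  have "(\<integral>\<^sup>+ z. ennreal (real (tot z)) \<partial>P i) = (\<integral>z. real (tot z) \<partial>P i)"
    by (rule nn_integral_eq_integral[OF I]) simp
  then show "Mtot P i = (\<integral>z. real (tot z) \<partial>P i)"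
    using e unfolding Mtot_def by (metis enn2real_ennreal integral_nonneg_AE of_nat_0_le_iff AE_I2)
qed

lemma SX:
  fixes f :: "nat \<Rightarrow> (nat \<Rightarrow> nat) \<Rightarrow> real"
  assumes G: "GWBP P" and fin: "Mtot_enn P i < \<infinity>" and c: "c \<ge> 0"
    and nn: "\<And>j z. 0 \<le> f j z" and le: "\<And>j z. f j z \<le> c * real (z j)"
  shows "(\<lambda>j. \<integral>z. f j z \<partial>P i) sums (\<integral>z. (\<Sum>j\<in>supp z. f j z) \<partial>P i)"
    and "integrable (measure_pmf (P i)) (f j)"
    and "integrable (measure_pmf (P i)) (\<lambda>z. \<Sum>j\<in>supp z. f j z)"
proof -
  note TI = tot_integrable(1)[OF fin]
  have If: "integrable (measure_pmf (P i)) (f j)" for j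
  proof (rule Bochner_Integration.integrable_bound[OF integrable_mult_right[OF TI, of c]])
    show "AE z in measure_pmf (P i). norm (f j z) \<le> norm (c * real (tot z))"
    proof (rule AE_pmfI)
      fix z assume "z \<in> set_pmf (P i)"
      then have "z j \<le> tot z" using le_tot supp_finite[OF G] by blast
      then have "c * real (z j) \<le> c * real (tot z)" using c by (simp add: mult_left_mono)
      then show "norm (f j z) \<le> norm (c * real (tot z))" using nn[of j z] le[of j z] c by simp
    qed
  qed simp
  then show "integrable (measure_pmf (P i)) (f j)" .
  have Ig: "integrable (measure_pmf (P i)) (\<lambda>z. \<Sum>j\<in>supp z. f j z)"
  proof (rule Bochner_Integration.integrable_bound[OF integrable_mult_right[OF TI, of c]])
    show "AE z in measure_pmf (P i). norm (\<Sum>j\<in>supp z. f j z) \<le> norm (c * real (tot z))"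
    proof (rule AE_pmfI)
      fix z assume "z \<in> set_pmf (P i)"
      have "(\<Sum>j\<in>supp z. f j z) \<le> (\<Sum>j\<in>supp z. c * real (z j))" by (rule sum_mono) (rule le)
      also have "\<dots> = c * real (tot z)" by (simp add: tot_def sum_distrib_left)
      finally show "norm (\<Sum>j\<in>supp z. f j z) \<le> norm (c * real (tot z))"
        using c by (simp add: sum_nonneg nn)
    qed
  qed simp
  then show "integrable (measure_pmf (P i)) (\<lambda>z. \<Sum>j\<in>supp z. f j z)" .
  have e1: "ennreal (\<integral>z. f j z \<partial>P i) = (\<integral>\<^sup>+z. ennreal (f j z) \<partial>P i)" for j
    using nn_integral_eq_integral[OF If[of j]] nn by simp
  have "(\<Sum>j. ennreal (\<integral>z. f j z \<partial>P i)) = (\<Sum>j. (\<integral>\<^sup>+z. ennreal (f j z) \<partial>P i))"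
    using e1 by simp
  also have "\<dots> = (\<integral>\<^sup>+z. (\<Sum>j. ennreal (f j z)) \<partial>P i)"
    by (rule nn_integral_suminf[symmetric]) simp
  also have "\<dots> = (\<integral>\<^sup>+z. ennreal (\<Sum>j\<in>supp z. f j z) \<partial>P i)"
  proof (rule nn_integral_cong_AE, rule AE_pmfI)
    fix z assume z: "z \<in> set_pmf (P i)"
    have "(\<Sum>j. ennreal (f j z)) = (\<Sum>j\<in>supp z. ennreal (f j z))"
    proof (rule suminf_finite[OF supp_finite[OF G z]])
      fix j assume "j \<notin> supp z"
      then have "z j = 0" by (simp add: supp_def)
      then show "ennreal (f j z) = 0" using le[of j z] nn[of j z] by simp
    qed
    then show "(\<Sum>j. ennreal (f j z)) = ennreal (\<Sum>j\<in>supp z. f j z)" using nn by simp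
  qed
  also have "\<dots> = ennreal (\<integral>z. (\<Sum>j\<in>supp z. f j z) \<partial>P i)"
    using nn_integral_eq_integral[OF Ig] nn by (simp add: sum_nonneg)
  finally have E: "(\<Sum>j. ennreal (\<integral>z. f j z \<partial>P i)) = ennreal (\<integral>z. (\<Sum>j\<in>supp z. f j z) \<partial>P i)" .
  have nnj: "0 \<le> (\<integral>z. f j z \<partial>P i)" for j by (rule integral_nonneg_AE) (simp add: nn)
  have S: "summable (\<lambda>j. \<integral>z. f j z \<partial>P i)"
    by (rule summable_suminf_not_top[OF nnj]) (simp add: E)
  have "ennreal (\<Sum>j. \<integral>z. f j z \<partial>P i) = ennreal (\<integral>z. (\<Sum>j\<in>supp z. f j z) \<partial>P i)"
    using suminf_ennreal2[OF nnj S] E by simp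
  moreover have "0 \<le> (\<integral>z. (\<Sum>j\<in>supp z. f j z) \<partial>P i)"
    by (rule integral_nonneg_AE) (simp add: nn sum_nonneg)
  moreover have "0 \<le> (\<Sum>j. \<integral>z. f j z \<partial>P i)" by (rule suminf_nonneg[OF S nnj])
  ultimately have "(\<Sum>j. \<integral>z. f j z \<partial>P i) = (\<integral>z. (\<Sum>j\<in>supp z. f j z) \<partial>P i)"
    by simp
  then show "(\<lambda>j. \<integral>z. f j z \<partial>P i) sums (\<integral>z. (\<Sum>j\<in>supp z. f j z) \<partial>P i)"
    using S summable_sums by force
qed



lemma Mij_int:
  assumes G: "GWBP P" and fin: "Mtot_enn P i < \<infinity>"
  shows "Mij P i j = (\<integral>z. real (z j) \<partial>P i)" and "Menn P i j = ennreal (Mij P i j)"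
    and "integrable (measure_pmf (P i)) (\<lambda>z. real (z j))"
proof -
  have I: "integrable (measure_pmf (P i)) (\<lambda>z. real (z j))"
    using SX(2)[OF G fin, of 1 "\<lambda>j z. real (z j)"] by simp
  then show "integrable (measure_pmf (P i)) (\<lambda>z. real (z j))" .
  have "Menn P i j = (\<integral>\<^sup>+ z. ennreal (real (z j)) \<partial>P i)"
    unfolding Menn_def by (simp only: ennreal_of_nat_eq_real_of_nat)
  also have "\<dots> = ennreal (\<integral>z. real (z j) \<partial>P i)"
    by (rule nn_integral_eq_integral[OF I]) simp
  finally have e: "Menn P i j = ennreal (\<integral>z. real (z j) \<partial>P i)" .
  have nn: "0 \<le> (\<integral>z. real (z j) \<partial>P i)" by (rule integral_nonneg_AE) simp
  show "Mij P i j = (\<integral>z. real (z j) \<partial>P i)" unfolding Mij_def e using nn by simp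
  then show "Menn P i j = ennreal (Mij P i j)" using e by simp
qed

lemma Mij_nonneg: "0 \<le> Mij P i j"
  by (simp add: Mij_def)

lemma Mtot_nonneg: "0 \<le> Mtot P i"
  by (simp add: Mtot_def)

lemma Msums:
  assumes G: "GWBP P" and fin: "Mtot_enn P i < \<infinity>"
  shows "(\<lambda>j. Mij P i j) sums Mtot P i"
proof -
  have "(\<lambda>j. \<integral>z. real (z j) \<partial>P i) sums (\<integral>z. (\<Sum>j\<in>supp z. real (z j)) \<partial>P i)"
    by (rule SX(1)[OF G fin, of 1]) auto
  moreover have "(\<integral>z. (\<Sum>j\<in>supp z. real (z j)) \<partial>P i) = Mtot P i"
    unfolding tot_integrable(2)[OF fin] tot_def by simp
  ultimately show ?thesis using Mij_int(1)[OF G fin] by simp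
qed

lemma one_minus_pow_le:
  fixes x :: real
  assumes "0 \<le> x" "x \<le> 1"
  shows "0 \<le> 1 - x ^ k" and "1 - x ^ k \<le> real k * (1 - x)"
proof -
  show "0 \<le> 1 - x ^ k" using assms by (simp add: power_le_one)
  show "1 - x ^ k \<le> real k * (1 - x)"
  proof (induction k)
    case 0 then show ?case by simp
  next
    case (Suc k)
    have "1 - x ^ Suc k = (1 - x ^ k) + x ^ k * (1 - x)" by (simp add: algebra_simps)
    also have "\<dots> \<le> real k * (1 - x) + 1 * (1 - x)"
      using Suc assms by (intro add_mono mult_right_mono) (auto simp: power_le_one)
    finally show ?case by (simp add: algebra_simps)
  qed
qed

lemma defect_le:
  fixes x :: real
  assumes "0 \<le> x" "x \<le> 1"
  shows "real k * (1 - x) - (1 - x ^ k) \<le> (real k)^2 * (1 - x)^2"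
proof (induction k)
  case 0 then show ?case by simp
next
  case (Suc k)
  have "real (Suc k) * (1 - x) - (1 - x ^ Suc k) = (real k * (1 - x) - (1 - x ^ k)) + (1 - x) * (1 - x ^ k)"
    by (simp add: algebra_simps)
  also have "\<dots> \<le> (real k)^2 * (1 - x)^2 + (1 - x) * (real k * (1 - x))"
    using Suc one_minus_pow_le[OF assms, of k] assms by (intro add_mono mult_left_mono) auto
  also have "\<dots> = ((real k)^2 + real k) * (1 - x)^2" by (simp add: power2_eq_square algebra_simps)
  also have "\<dots> \<le> (real (Suc k))^2 * (1 - x)^2"
    by (rule mult_right_mono) (simp add: power2_eq_square algebra_simps, simp)
  finally show ?case .
qed

lemma one_minus_prod_le:
  fixes a :: "nat \<Rightarrow> real"
  assumes "finite A" "\<And>j. j \<in> A \<Longrightarrow> 0 \<le> a j \<and> a j \<le> 1"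
  shows "1 - (\<Prod>j\<in>A. a j) \<le> (\<Sum>j\<in>A. 1 - a j)"
  using assms
proof (induction A rule: finite_induct)
  case empty
  show ?case by simp
next
  case (insert b A)
  have p: "0 \<le> (\<Prod>j\<in>A. a j)" "(\<Prod>j\<in>A. a j) \<le> 1" "1 - (\<Prod>j\<in>A. a j) \<le> (\<Sum>j\<in>A. 1 - a j)"
    using insert by (auto intro!: prod_nonneg prod_le_1)
  have ab: "0 \<le> a b" "a b \<le> 1" using insert by auto
  have "1 - (\<Prod>j\<in>insert b A. a j) = (1 - a b) + a b * (1 - (\<Prod>j\<in>A. a j))"
    using insert by (simp add: algebra_simps)
  also have "\<dots> \<le> (1 - a b) + 1 * (\<Sum>j\<in>A. 1 - a j)"
    using p ab by (intro add_left_mono mult_mono) auto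
  finally show ?case using insert by simp
qed



lemma cube_le: "s \<in> unit_cube \<Longrightarrow> 0 \<le> s j \<and> s j \<le> 1"
  by (simp add: unit_cube_def)

lemma prodz_bounds:
  assumes "s \<in> unit_cube"
  shows "0 \<le> (\<Prod>j\<in>supp z. s j ^ z j)" "(\<Prod>j\<in>supp z. s j ^ z j) \<le> (1::real)"
  using cube_le[OF assms] by (auto intro!: prod_nonneg prod_le_1 power_le_one)

lemma prodz_integrable:
  assumes "s \<in> unit_cube"
  shows "integrable (measure_pmf p) (\<lambda>z. \<Prod>j\<in>supp z. s j ^ z j)"
  by (rule pmf_integrable_bounded[where B=1]) (use prodz_bounds[OF assms] in auto)

lemma genF_bounds:
  assumes "s \<in> unit_cube"
  shows "0 \<le> genF P i s" "genF P i s \<le> 1"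
proof -
  show "0 \<le> genF P i s" unfolding genF_def
    by (rule integral_nonneg_AE) (use prodz_bounds[OF assms] in auto)
  have "genF P i s \<le> (\<integral>z. 1 \<partial>P i)" unfolding genF_def
    by (rule integral_mono[OF prodz_integrable[OF assms]]) (use prodz_bounds[OF assms] in auto)
  then show "genF P i s \<le> 1" by simp
qed

lemma genF_mono:
  assumes "s \<in> unit_cube" "t \<in> unit_cube" "\<And>j. s j \<le> t j"
  shows "genF P i s \<le> genF P i t"
  unfolding genF_def
proof (rule integral_mono[OF prodz_integrable[OF assms(1)] prodz_integrable[OF assms(2)]])
  fix z :: "nat \<Rightarrow> nat"
  show "(\<Prod>j\<in>supp z. s j ^ z j) \<le> (\<Prod>j\<in>supp z. t j ^ z j)"
    using cube_le[OF assms(1)] assms(3) by (intro prod_mono) (auto intro: power_mono)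
qed

lemma genFn_cube: "s \<in> unit_cube \<Longrightarrow> genFn P n s \<in> unit_cube"
  by (induction n) (auto simp: unit_cube_def genF_bounds)

lemma genFn_mono:
  assumes "s \<in> unit_cube" "t \<in> unit_cube" "\<And>j. s j \<le> t j"
  shows "genFn P n s j \<le> genFn P n t j"
proof (induction n arbitrary: j)
  case 0 then show ?case using assms by simp
next
  case (Suc n) then show ?case
    using genF_mono[OF genFn_cube[OF assms(1)] genFn_cube[OF assms(2)]] by simp
qed

lemma Mw_sums:
  assumes G: "GWBP P" and fin: "Mtot_enn P i < \<infinity>" and w: "\<And>j. 0 \<le> w j \<and> w j \<le> 1"
  shows "(\<lambda>j. Mij P i j * w j) sums (\<integral>z. (\<Sum>j\<in>supp z. real (z j) * w j) \<partial>P i)"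
proof -
  have "(\<lambda>j. \<integral>z. real (z j) * w j \<partial>P i) sums (\<integral>z. (\<Sum>j\<in>supp z. real (z j) * w j) \<partial>P i)"
    by (rule SX(1)[OF G fin, of 1]) (use w in \<open>auto intro: mult_left_le\<close>)
  moreover have "(\<lambda>j. \<integral>z. real (z j) * w j \<partial>P i) = (\<lambda>j. Mij P i j * w j)"
    using Mij_int(1)[OF G fin] by (intro ext) simp
  ultimately show ?thesis by simp
qed

lemma Qij_int:
  assumes "0 \<le> x" "x \<le> 1"
  shows "Qij P i j x = (\<integral>z. 1 - x ^ z j \<partial>P i)"
proof -
  have I: "integrable (measure_pmf (P i)) (\<lambda>z. x ^ z j)"
    by (rule pmf_integrable_bounded[where B=1]) (use assms in \<open>auto intro: power_le_one\<close>)
  show ?thesis unfolding Qij_def by (subst Bochner_Integration.integral_diff[OF _ I]) auto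
qed

lemma Qij_sums:
  assumes G: "GWBP P" and fin: "Mtot_enn P i < \<infinity>" and s: "s \<in> unit_cube"
  shows "(\<lambda>j. Qij P i j (s j)) sums (\<integral>z. (\<Sum>j\<in>supp z. 1 - s j ^ z j) \<partial>P i)"
proof -
  have "(\<lambda>j. \<integral>z. 1 - s j ^ z j \<partial>P i) sums (\<integral>z. (\<Sum>j\<in>supp z. 1 - s j ^ z j) \<partial>P i)"
  proof (rule SX(1)[OF G fin, of 1])
    fix j z
    show "0 \<le> 1 - s j ^ z j" using one_minus_pow_le(1)[of "s j"] cube_le[OF s] by auto
    have "1 - s j ^ z j \<le> real (z j) * (1 - s j)" using one_minus_pow_le(2)[of "s j"] cube_le[OF s] by auto
    also have "\<dots> \<le> 1 * real (z j)" using cube_le[OF s, of j] by (auto intro: mult_left_le)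
    finally show "1 - s j ^ z j \<le> 1 * real (z j)" .
  qed simp
  then show ?thesis using Qij_int cube_le[OF s] by simp
qed

lemma eps2_num:
  assumes G: "GWBP P" and fin: "Mtot_enn P i < \<infinity>" and s: "s \<in> unit_cube"
  shows "(\<Sum>j. Mij P i j * (1 - s j)) - (\<Sum>j. Qij P i j (s j))
       = (\<integral>z. (\<Sum>j\<in>supp z. real (z j) * (1 - s j) - (1 - s j ^ z j)) \<partial>P i)"
proof -
  have w: "\<And>j. 0 \<le> 1 - s j \<and> 1 - s j \<le> 1" using cube_le[OF s] by auto
  have A: "(\<lambda>j. Mij P i j * (1 - s j)) sums (\<integral>z. (\<Sum>j\<in>supp z. real (z j) * (1 - s j)) \<partial>P i)"
    by (rule Mw_sums[OF G fin w])
  have IA: "integrable (measure_pmf (P i)) (\<lambda>z. \<Sum>j\<in>supp z. real (z j) * (1 - s j))"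
    by (rule SX(3)[OF G fin, of 1]) (use w in \<open>auto intro: mult_left_le\<close>)
  have B: "(\<lambda>j. Qij P i j (s j)) sums (\<integral>z. (\<Sum>j\<in>supp z. 1 - s j ^ z j) \<partial>P i)"
    by (rule Qij_sums[OF G fin s])
  have IB: "integrable (measure_pmf (P i)) (\<lambda>z. \<Sum>j\<in>supp z. 1 - s j ^ z j)"
  proof (rule SX(3)[OF G fin, of 1])
    fix j z
    show "0 \<le> 1 - s j ^ z j" using one_minus_pow_le(1)[of "s j"] cube_le[OF s] by auto
    have "1 - s j ^ z j \<le> real (z j) * (1 - s j)" using one_minus_pow_le(2)[of "s j"] cube_le[OF s] by auto
    also have "\<dots> \<le> 1 * real (z j)" using cube_le[OF s, of j] by (auto intro: mult_left_le)
    finally show "1 - s j ^ z j \<le> 1 * real (z j)" .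
  qed simp
  show ?thesis
    unfolding sums_unique[OF A, symmetric] sums_unique[OF B, symmetric]
    by (subst Bochner_Integration.integral_diff[OF IA IB, symmetric]) (simp add: sum_subtractf)
qed



lemma norm_inf_props:
  assumes s: "s \<in> unit_cube"
  shows "\<And>j. 1 - s j \<le> norm_inf s" "0 \<le> norm_inf s" "norm_inf s \<le> 1"
proof -
  have b: "bdd_above (range (\<lambda>j. 1 - s j))"
    using cube_le[OF s] by (intro bdd_aboveI[where M=1]) auto
  show u: "1 - s j \<le> norm_inf s" for j unfolding norm_inf_def by (rule cSUP_upper[OF _ b]) simp
  show "0 \<le> norm_inf s" using u[of 0] cube_le[OF s, of 0] by simp
  show "norm_inf s \<le> 1" unfolding norm_inf_def using cube_le[OF s] by (intro cSUP_least) auto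
qed

lemma norm_inf_pos: "s \<in> Sset \<Longrightarrow> 0 < norm_inf s"
proof -
  assume s: "s \<in> Sset"
  then have c: "s \<in> unit_cube" and "s \<noteq> (\<lambda>_. 1)" by (auto simp: Sset_def)
  then obtain j where "s j \<noteq> 1" by auto
  then have "s j < 1" using cube_le[OF c, of j] by simp
  then show ?thesis using norm_inf_props(1)[OF c, of j] by simp
qed

definition Dz :: "(nat \<Rightarrow> real) \<Rightarrow> (nat \<Rightarrow> nat) \<Rightarrow> real" where
  "Dz s z = (\<Sum>j\<in>supp z. real (z j) * (1 - s j) - (1 - s j ^ z j))"

lemma Dz_bounds:
  assumes s: "s \<in> unit_cube" and f: "finite (supp z)"
  shows "0 \<le> Dz s z"
    and "Dz s z \<le> norm_inf s * (real (tot z) * indicator {z. tot z > K} z) + (norm_inf s)^2 * real K * real (tot z)"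
proof -
  let ?d = "norm_inf s"
  have t: "0 \<le> 1 - s j" "1 - s j \<le> ?d" for j using cube_le[OF s, of j] norm_inf_props[OF s] by auto
  have term0: "0 \<le> real (z j) * (1 - s j) - (1 - s j ^ z j)" for j
    using one_minus_pow_le(2)[of "s j" "z j"] cube_le[OF s, of j] by simp
  show "0 \<le> Dz s z" unfolding Dz_def by (rule sum_nonneg) (use term0 in auto)
  have ub1: "Dz s z \<le> ?d * real (tot z)"
  proof -
    have "Dz s z \<le> (\<Sum>j\<in>supp z. real (z j) * ?d)" unfolding Dz_def
    proof (rule sum_mono)
      fix j
      have "real (z j) * (1 - s j) - (1 - s j ^ z j) \<le> real (z j) * (1 - s j)"
        using one_minus_pow_le(1)[of "s j" "z j"] cube_le[OF s, of j] by simp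
      also have "\<dots> \<le> real (z j) * ?d" using t[of j] by (intro mult_left_mono) auto
      finally show "real (z j) * (1 - s j) - (1 - s j ^ z j) \<le> real (z j) * ?d" .
    qed
    also have "\<dots> = ?d * real (tot z)" by (simp add: tot_def sum_distrib_left mult.commute)
    finally show ?thesis .
  qed
  have ub2: "Dz s z \<le> ?d^2 * real (tot z) * real (tot z)"
  proof -
    have "Dz s z \<le> (\<Sum>j\<in>supp z. ?d^2 * real (tot z) * real (z j))" unfolding Dz_def
    proof (rule sum_mono)
      fix j
      have "real (z j) * (1 - s j) - (1 - s j ^ z j) \<le> (real (z j))^2 * (1 - s j)^2"
        using defect_le[of "s j" "z j"] cube_le[OF s, of j] by simp
      also have "\<dots> \<le> (real (z j))^2 * ?d^2"
        using t[of j] by (intro mult_left_mono power_mono) auto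
      also have "\<dots> = ?d^2 * real (z j) * real (z j)" by (simp add: power2_eq_square)
      also have "\<dots> \<le> ?d^2 * real (tot z) * real (z j)"
        using le_tot[OF f, of j] by (intro mult_right_mono mult_left_mono) auto
      finally show "real (z j) * (1 - s j) - (1 - s j ^ z j) \<le> ?d^2 * real (tot z) * real (z j)" .
    qed
    also have "\<dots> = ?d^2 * real (tot z) * real (tot z)" by (simp add: tot_def sum_distrib_left)
    finally show ?thesis .
  qed
  have d0: "0 \<le> ?d" using norm_inf_props[OF s] by simp
  show "Dz s z \<le> ?d * (real (tot z) * indicator {z. tot z > K} z) + ?d^2 * real K * real (tot z)"
  proof (cases "tot z > K")
    case True
    then show ?thesis using ub1 d0 by (simp add: add_increasing2)
  next
    case False
    have "?d^2 * real (tot z) * real (tot z) \<le> ?d^2 * real K * real (tot z)"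
      using False by (intro mult_right_mono mult_left_mono) auto
    then show ?thesis using False ub2 by simp
  qed
qed



lemma eps2_bound:
  assumes G: "GWBP P" and fin: "Mtot_enn P i < \<infinity>" and s: "s \<in> unit_cube" and e1: "0 \<le> e1"
    and UI: "enn2real (\<integral>\<^sup>+ z. of_nat (tot z) * indicator {z. tot z > K} z \<partial>measure_pmf (P i)) / Mtot P i \<le> e1"
  shows "\<bar>eps2 P i s\<bar> \<le> norm_inf s * (e1 + norm_inf s * real K)"
proof -
  let ?d = "norm_inf s"
  define g where "g z = real (tot z) * indicator {z. tot z > K} z" for z :: "nat \<Rightarrow> nat"
  note TI = tot_integrable[OF fin]
  have d0: "0 \<le> ?d" using norm_inf_props[OF s] by simp
  have g0: "0 \<le> g z" "g z \<le> real (tot z)" for z by (auto simp: g_def indicator_def)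
  have Ig: "integrable (measure_pmf (P i)) g"
    by (rule Bochner_Integration.integrable_bound[OF TI(1)]) (use g0 in auto)
  have U: "enn2real (\<integral>\<^sup>+ z. of_nat (tot z) * indicator {z. tot z > K} z \<partial>measure_pmf (P i)) = (\<integral>z. g z \<partial>P i)"
    by (rule enn2real_nn_integral_eq_integral) (auto simp: g_def indicator_def ennreal_of_nat_eq_real_of_nat)
  define B where "B z = ?d * g z + ?d^2 * real K * real (tot z)" for z
  have IB: "integrable (measure_pmf (P i)) B" unfolding B_def using Ig TI(1) by simp
  have DB: "0 \<le> Dz s z \<and> Dz s z \<le> B z" if "z \<in> set_pmf (P i)" for z
    using Dz_bounds(1)[OF s supp_finite[OF G that]] Dz_bounds(2)[OF s supp_finite[OF G that], of K] unfolding B_def g_def by simp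
  have ID: "integrable (measure_pmf (P i)) (Dz s)"
  proof (rule Bochner_Integration.integrable_bound[OF IB])
    show "AE z in measure_pmf (P i). norm (Dz s z) \<le> norm (B z)"
      by (rule AE_pmfI) (use DB in fastforce)
  qed simp
  have num: "(\<Sum>j. Mij P i j * (1 - s j)) - (\<Sum>j. Qij P i j (s j)) = (\<integral>z. Dz s z \<partial>P i)"
    using eps2_num[OF G fin s] unfolding Dz_def by simp
  have n0: "0 \<le> (\<integral>z. Dz s z \<partial>P i)" by (rule integral_nonneg_AE, rule AE_pmfI) (use DB in auto)
  have "(\<integral>z. Dz s z \<partial>P i) \<le> (\<integral>z. B z \<partial>P i)"
    by (rule integral_mono_AE[OF ID IB], rule AE_pmfI) (use DB in auto)
  also have "\<dots> = ?d * (\<integral>z. g z \<partial>P i) + ?d^2 * real K * Mtot P i"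
    unfolding B_def TI(2) using Ig TI(1) by simp
  finally have nb: "(\<integral>z. Dz s z \<partial>P i) \<le> ?d * (\<integral>z. g z \<partial>P i) + ?d^2 * real K * Mtot P i" .
  show ?thesis
  proof (cases "Mtot P i = 0")
    case True
    then show ?thesis unfolding eps2_def using d0 e1 by simp
  next
    case False
    then have Mp: "0 < Mtot P i" using Mtot_nonneg[of P i] by simp
    have "\<bar>eps2 P i s\<bar> = (\<integral>z. Dz s z \<partial>P i) / Mtot P i" unfolding eps2_def num using n0 Mp by simp
    also have "\<dots> \<le> (?d * (\<integral>z. g z \<partial>P i) + ?d^2 * real K * Mtot P i) / Mtot P i"
      using nb Mp by (simp add: divide_right_mono)
    also have "\<dots> = ?d * ((\<integral>z. g z \<partial>P i) / Mtot P i) + ?d^2 * real K"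
      using Mp by (simp add: field_simps)
    also have "\<dots> \<le> ?d * e1 + ?d^2 * real K"
    proof -
      have "(\<integral>z. g z \<partial>P i) / Mtot P i \<le> e1" using UI U by simp
      then have "?d * ((\<integral>z. g z \<partial>P i) / Mtot P i) \<le> ?d * e1" using d0 by (rule mult_left_mono)
      then show ?thesis by linarith
    qed
    also have "\<dots> = ?d * (e1 + ?d * real K)" by (simp add: algebra_simps power2_eq_square)
    finally show ?thesis .
  qed
qed



lemma M1_fin: "M1 P \<Longrightarrow> Mtot_enn P i < \<infinity>"
  by (simp add: M1_def)

lemma M1_UI:
  assumes "M1 P" "e > 0"
  shows "\<exists>K. \<forall>i.
        enn2real (\<integral>\<^sup>+ z. of_nat (tot z) * indicator {z. tot z > K} z \<partial>measure_pmf (P i))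
          / Mtot P i \<le> e"
proof -
  have "\<forall>e>0. \<exists>K0. \<forall>K\<ge>K0. \<forall>i.
        enn2real (\<integral>\<^sup>+ z. of_nat (tot z) * indicator {z. tot z > K} z \<partial>measure_pmf (P i))
          / Mtot P i \<le> e" using assms(1) unfolding M1_def by (elim conjE)
  then obtain K0 where "\<forall>K\<ge>K0. \<forall>i.
        enn2real (\<integral>\<^sup>+ z. of_nat (tot z) * indicator {z. tot z > K} z \<partial>measure_pmf (P i))
          / Mtot P i \<le> e" using assms(2) by auto
  then show ?thesis by auto
qed

lemma M1_tail:
  assumes "M1 P" "e > 0"
  shows "\<exists>N. \<forall>i. (\<Sum>k. Mij P i (k + N + 1)) / Mtot P i \<le> e"
proof -
  have "\<forall>e>0. \<exists>N0. \<forall>N\<ge>N0. \<forall>i. (\<Sum>k. Mij P i (k + N + 1)) / Mtot P i \<le> e"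
    using assms(1) unfolding M1_def by (elim conjE)
  then obtain N0 where "\<forall>N\<ge>N0. \<forall>i. (\<Sum>k. Mij P i (k + N + 1)) / Mtot P i \<le> e" using assms(2) by auto
  then show ?thesis by auto
qed

lemma part1:
  assumes G: "GWBP P" and M: "M1 P" and e: "e > 0"
  shows "\<exists>d>0. \<forall>s\<in>unit_cube. norm_inf s < d \<longrightarrow> (\<forall>i. \<bar>eps2 P i s\<bar> \<le> e * norm_inf s)"
proof -
  obtain K where K: "\<And>i. enn2real (\<integral>\<^sup>+ z. of_nat (tot z) * indicator {z. tot z > K} z \<partial>measure_pmf (P i))
          / Mtot P i \<le> e / 2" using M1_UI[OF M, of "e/2"] e by auto
  define d where "d = e / (2 * (real K + 1))"
  have d0: "d > 0" using e by (simp add: d_def)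
  have dK: "d * real K \<le> e / 2" using e unfolding d_def by (simp add: field_simps)
  show ?thesis
  proof (intro exI[of _ d] conjI ballI impI allI d0)
    fix s i assume s: "s \<in> unit_cube" and sd: "norm_inf s < d"
    have n0: "0 \<le> norm_inf s" using norm_inf_props[OF s] by simp
    have "\<bar>eps2 P i s\<bar> \<le> norm_inf s * (e/2 + norm_inf s * real K)"
      by (rule eps2_bound[OF G M1_fin[OF M] s _ K]) (use e in simp)
    also have "\<dots> \<le> norm_inf s * (e/2 + e/2)"
    proof (rule mult_left_mono[OF _ n0])
      have "norm_inf s * real K \<le> d * real K" using sd by (intro mult_right_mono) auto
      then show "e/2 + norm_inf s * real K \<le> e/2 + e/2" using dK by simp
    qed
    finally show "\<bar>eps2 P i s\<bar> \<le> e * norm_inf s" by (simp add: mult.commute)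
  qed
qed

lemma zero_cube: "(\<lambda>_. 0) \<in> unit_cube" by (simp add: unit_cube_def)



lemma one_minus_genF_le:
  assumes G: "GWBP P" and fin: "Mtot_enn P i < \<infinity>" and s: "s \<in> unit_cube"
  shows "1 - genF P i s \<le> (\<Sum>j. Mij P i j * (1 - s j))"
proof -
  have w: "\<And>j. 0 \<le> 1 - s j \<and> 1 - s j \<le> 1" using cube_le[OF s] by auto
  have A: "(\<lambda>j. Mij P i j * (1 - s j)) sums (\<integral>z. (\<Sum>j\<in>supp z. real (z j) * (1 - s j)) \<partial>P i)"
    by (rule Mw_sums[OF G fin w])
  have IA: "integrable (measure_pmf (P i)) (\<lambda>z. \<Sum>j\<in>supp z. real (z j) * (1 - s j))"
    by (rule SX(3)[OF G fin, of 1]) (use w in \<open>auto intro: mult_left_le\<close>)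
  have I1: "integrable (measure_pmf (P i)) (\<lambda>z. 1 - (\<Prod>j\<in>supp z. s j ^ z j))"
    using prodz_integrable[OF s] by simp
  have "1 - genF P i s = (\<integral>z. 1 - (\<Prod>j\<in>supp z. s j ^ z j) \<partial>P i)"
    unfolding genF_def by (subst Bochner_Integration.integral_diff[OF _ prodz_integrable[OF s]]) auto
  also have "\<dots> \<le> (\<integral>z. (\<Sum>j\<in>supp z. real (z j) * (1 - s j)) \<partial>P i)"
  proof (rule integral_mono_AE[OF I1 IA], rule AE_pmfI)
    fix z assume z: "z \<in> set_pmf (P i)"
    have "1 - (\<Prod>j\<in>supp z. s j ^ z j) \<le> (\<Sum>j\<in>supp z. 1 - s j ^ z j)"
      by (rule one_minus_prod_le[OF supp_finite[OF G z]]) (use cube_le[OF s] in \<open>auto intro: power_le_one\<close>)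
    also have "\<dots> \<le> (\<Sum>j\<in>supp z. real (z j) * (1 - s j))"
      by (rule sum_mono) (use one_minus_pow_le(2) cube_le[OF s] in auto)
    finally show "1 - (\<Prod>j\<in>supp z. s j ^ z j) \<le> (\<Sum>j\<in>supp z. real (z j) * (1 - s j))" .
  qed
  also have "\<dots> = (\<Sum>j. Mij P i j * (1 - s j))" using sums_unique[OF A] by simp
  finally show ?thesis .
qed

lemma tail_bound:
  assumes G: "GWBP P" and fin: "Mtot_enn P i < \<infinity>" and w: "\<And>j. 0 \<le> w j \<and> w j \<le> 1"
    and tail: "(\<Sum>k. Mij P i (k + N + 1)) / Mtot P i \<le> \<eta>" and eta: "0 \<le> \<eta>"
    and c: "\<And>j. j \<le> N \<Longrightarrow> w j \<le> c" and c0: "0 \<le> c"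
  shows "(\<Sum>j. Mij P i j * w j) \<le> Mtot P i * (c + \<eta>)"
proof -
  have Ms: "(\<lambda>j. Mij P i j) sums Mtot P i" by (rule Msums[OF G fin])
  have SM: "summable (\<lambda>j. Mij P i j)" using Ms by (simp add: sums_iff)
  have Sw: "summable (\<lambda>j. Mij P i j * w j)" using Mw_sums[OF G fin w] by (simp add: sums_iff)
  have split: "(\<Sum>j. Mij P i j * w j) = (\<Sum>k. Mij P i (k + Suc N) * w (k + Suc N)) + (\<Sum>j<Suc N. Mij P i j * w j)"
    by (rule suminf_split_initial_segment[OF Sw])
  have head: "(\<Sum>j<Suc N. Mij P i j * w j) \<le> c * Mtot P i"
  proof -
    have "(\<Sum>j<Suc N. Mij P i j * w j) \<le> (\<Sum>j<Suc N. c * Mij P i j)"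
    proof (rule sum_mono)
      fix j assume "j \<in> {..<Suc N}"
      then have "w j \<le> c" using c by auto
      then show "Mij P i j * w j \<le> c * Mij P i j" using Mij_nonneg[of P i j] by (simp add: mult.commute mult_right_mono)
    qed
    also have "\<dots> = c * (\<Sum>j<Suc N. Mij P i j)" by (simp only: sum_distrib_left)
    also have "(\<Sum>j<Suc N. Mij P i j) \<le> Mtot P i"
      using sum_le_suminf[OF SM, of "{..<Suc N}"] sums_unique[OF Ms] Mij_nonneg by auto
    then have "c * (\<Sum>j<Suc N. Mij P i j) \<le> c * Mtot P i" using c0 by (rule mult_left_mono)
    finally show ?thesis .
  qed
  have ST: "summable (\<lambda>k. Mij P i (k + Suc N))" by (rule summable_ignore_initial_segment[OF SM])
  have t1: "(\<Sum>k. Mij P i (k + Suc N) * w (k + Suc N)) \<le> (\<Sum>k. Mij P i (k + Suc N))"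
    by (rule suminf_le[OF _ summable_ignore_initial_segment[OF Sw] ST])
       (use w Mij_nonneg in \<open>auto intro: mult_left_le\<close>)
  have t2: "(\<Sum>k. Mij P i (k + Suc N)) \<le> \<eta> * Mtot P i"
  proof (cases "Mtot P i = 0")
    case True
    then have "\<forall>j. Mij P i j = 0" using suminf_eq_zero_iff[OF SM] Mij_nonneg sums_unique[OF Ms] by auto
    then show ?thesis using True by simp
  next
    case False
    then have "0 < Mtot P i" using Mtot_nonneg[of P i] by simp
    then show ?thesis using tail by (simp add: divide_le_eq)
  qed
  show ?thesis using split head t1 t2 by (simp add: algebra_simps)
qed



lemma M1_u:
  assumes "M1 P"
  shows "\<exists>u. (\<forall>j. u j > 0) \<and> right_eigen P u \<and> bdd_above (range u)"
proof -
  have "\<exists>v u. (\<forall>j. v j > 0) \<and> (\<forall>j. u j > 0) \<and> left_eigen P v \<and> right_eigen P u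
        \<and> (\<lambda>j. v j * u j) sums 1
        \<and> v sums 1 \<and> bdd_above (range u)" using assms unfolding M1_def by (elim conjE)
  then show ?thesis by blast
qed

lemma head_half:
  assumes G: "GWBP P" and fin: "Mtot_enn P i < \<infinity>"
    and tail: "(\<Sum>k. Mij P i (k + N + 1)) / Mtot P i \<le> 1/2"
  shows "Mtot P i \<le> 2 * (\<Sum>j<Suc N. Mij P i j)"
proof -
  have Ms: "(\<lambda>j. Mij P i j) sums Mtot P i" by (rule Msums[OF G fin])
  have SM: "summable (\<lambda>j. Mij P i j)" using Ms by (simp add: sums_iff)
  have split: "Mtot P i = (\<Sum>k. Mij P i (k + Suc N)) + (\<Sum>j<Suc N. Mij P i j)"
    using suminf_split_initial_segment[OF SM, of "Suc N"] sums_unique[OF Ms] by simp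
  have t2: "(\<Sum>k. Mij P i (k + Suc N)) \<le> 1/2 * Mtot P i"
  proof (cases "Mtot P i = 0")
    case True
    then have "\<forall>j. Mij P i j = 0" using suminf_eq_zero_iff[OF SM] Mij_nonneg sums_unique[OF Ms] by auto
    then show ?thesis using True by simp
  next
    case False
    then have "0 < Mtot P i" using Mtot_nonneg[of P i] by simp
    then show ?thesis using tail by (simp add: divide_le_eq)
  qed
  show ?thesis using split t2 by simp
qed

lemma Mtot_bdd:
  assumes G: "GWBP P" and M: "M1 P"
  shows "\<exists>B. \<forall>i. Mtot P i \<le> B"
proof -
  obtain u where u: "\<And>j. u j > 0" "right_eigen P u" "bdd_above (range u)" using M1_u[OF M] by blast
  obtain U where U: "\<And>j. u j \<le> U" using u(3) by (auto simp: bdd_above_def)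
  obtain N where N: "\<And>i. (\<Sum>k. Mij P i (k + N + 1)) / Mtot P i \<le> 1/2" using M1_tail[OF M, of "1/2"] by auto
  define c where "c = Min (u ` {..<Suc N})"
  have c0: "c > 0" unfolding c_def using u(1) by (subst Min_gr_iff) auto
  have cle: "c \<le> u j" if "j < Suc N" for j unfolding c_def using that by (intro Min_le) auto
  show ?thesis
  proof (intro exI[of _ "2 * U / c"] allI)
    fix i
    note fin = M1_fin[OF M, of i]
    have nn: "0 \<le> Mij P i j * u j" for j using Mij_nonneg[of P i j] u(1)[of j] by simp
    have "ennreal (\<Sum>j<Suc N. Mij P i j * u j) = (\<Sum>j<Suc N. ennreal (Mij P i j * u j))"
      by (rule sum_ennreal[symmetric]) (rule nn)
    also have "\<dots> = (\<Sum>j<Suc N. Menn P i j * ennreal (u j))"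
      by (rule sum.cong) (simp_all add: Mij_int(2)[OF G fin] ennreal_mult Mij_nonneg less_imp_le u(1))
    also have "\<dots> \<le> (\<Sum>j. Menn P i j * ennreal (u j))"
      by (rule sum_le_suminf[OF summableI]) simp_all
    also have "\<dots> = ennreal (u i)" using u(2) by (simp add: right_eigen_def)
    finally have h: "(\<Sum>j<Suc N. Mij P i j * u j) \<le> u i"
      using u(1)[of i] by (simp add: ennreal_le_iff less_imp_le)
    have "c * (\<Sum>j<Suc N. Mij P i j) = (\<Sum>j<Suc N. c * Mij P i j)" by (simp only: sum_distrib_left)
    also have "\<dots> \<le> (\<Sum>j<Suc N. Mij P i j * u j)"
      by (rule sum_mono) (use cle Mij_nonneg in \<open>auto simp: mult.commute intro: mult_right_mono\<close>)
    finally have "c * (\<Sum>j<Suc N. Mij P i j) \<le> U" using h U[of i] by simp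
    moreover have "c * Mtot P i \<le> c * (2 * (\<Sum>j<Suc N. Mij P i j))"
      using head_half[OF G fin N] c0 by (intro mult_left_mono) auto
    ultimately have "c * Mtot P i \<le> 2 * U" by linarith
    then show "Mtot P i \<le> 2 * U / c" using c0 by (simp add: field_simps)
  qed
qed



lemma vM:
  assumes G: "GWBP P" and fin: "\<And>i. Mtot_enn P i < \<infinity>"
    and LE: "left_eigen P v" and vp: "\<And>j. v j > 0" and vs: "v sums 1"
    and w: "\<And>j. 0 \<le> w j \<and> w j \<le> 1"
  shows "(\<lambda>i. v i * (\<Sum>j. Mij P i j * w j)) sums (\<Sum>j. v j * w j)"
    and "summable (\<lambda>j. v j * w j)"
proof -
  define r where "r i = (\<Sum>j. Mij P i j * w j)" for i
  have rs: "(\<lambda>j. Mij P i j * w j) sums r i" for i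
    using Mw_sums[OF G fin w] unfolding r_def by (simp add: sums_iff)
  have nnMw: "0 \<le> Mij P i j * w j" for i j using Mij_nonneg[of P i j] w[of j] by simp
  have r0: "0 \<le> r i" for i using sums_le[OF _ sums_zero rs[of i]] nnMw by simp
  have er: "ennreal (r i) = (\<Sum>j. Menn P i j * ennreal (w j))" for i
  proof -
    have "ennreal (r i) = (\<Sum>j. ennreal (Mij P i j * w j))"
      using suminf_ennreal2[of "\<lambda>j. Mij P i j * w j", OF nnMw] rs[of i] by (simp add: sums_iff)
    also have "\<dots> = (\<Sum>j. Menn P i j * ennreal (w j))"
      using Mij_int(2)[OF G fin] w Mij_nonneg by (simp add: ennreal_mult)
    finally show ?thesis .
  qed
  have "(\<Sum>i. ennreal (v i * r i)) = (\<Sum>i. ennreal (v i) * (\<Sum>j. Menn P i j * ennreal (w j)))"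
  proof (rule arg_cong[where f=suminf], rule ext)
    fix i
    show "ennreal (v i * r i) = ennreal (v i) * (\<Sum>j. Menn P i j * ennreal (w j))"
      using er[of i] vp[of i] r0[of i] by (simp add: ennreal_mult)
  qed
  also have "\<dots> = (\<Sum>i. \<Sum>j. ennreal (v i) * Menn P i j * ennreal (w j))"
    by (simp add: mult.assoc)
  also have "\<dots> = (\<Sum>j. \<Sum>i. ennreal (v i) * Menn P i j * ennreal (w j))"
    by (rule ennsum_swap)
  also have "\<dots> = (\<Sum>j. ennreal (v j) * ennreal (w j))"
    using LE by (simp add: left_eigen_def)
  also have "\<dots> = (\<Sum>j. ennreal (v j * w j))"
  proof (rule arg_cong[where f=suminf], rule ext)
    fix j
    show "ennreal (v j) * ennreal (w j) = ennreal (v j * w j)"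
      using vp[of j] w[of j] by (simp add: ennreal_mult)
  qed
  finally have E: "(\<Sum>i. ennreal (v i * r i)) = (\<Sum>j. ennreal (v j * w j))" .
  have vw0: "0 \<le> v j * w j" for j using vp[of j] w[of j] by simp
  have le1: "(\<Sum>j. ennreal (v j * w j)) \<le> (\<Sum>j. ennreal (v j))"
  proof (rule suminf_le[OF _ summableI summableI])
    fix j
    have "v j * w j \<le> v j" using vp[of j] w[of j] by (intro mult_left_le) auto
    then show "ennreal (v j * w j) \<le> ennreal (v j)" by (rule ennreal_leI)
  qed
  have "(\<Sum>j. ennreal (v j)) = ennreal (\<Sum>j. v j)"
    by (rule suminf_ennreal2) (use vp in \<open>rule less_imp_le\<close>, use vs in \<open>simp only: sums_iff\<close>)
  then have "(\<Sum>j. ennreal (v j)) \<noteq> top" by (simp only: ennreal_neq_top not_False_eq_True)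
  then have lt: "(\<Sum>j. ennreal (v j * w j)) \<noteq> top" using le1 by (rule neq_top_trans)
  have S1: "summable (\<lambda>j. v j * w j)" by (rule summable_suminf_not_top[OF vw0 lt])
  then show "summable (\<lambda>j. v j * w j)" .
  have vr0: "0 \<le> v i * r i" for i using vp[of i] r0[of i] by simp
  have "(\<Sum>i. ennreal (v i * r i)) \<noteq> top" using lt unfolding E .
  then have S2: "summable (\<lambda>i. v i * r i)" by (rule summable_suminf_not_top[OF vr0])
  have "ennreal (\<Sum>i. v i * r i) = ennreal (\<Sum>j. v j * w j)"
    using E unfolding suminf_ennreal2[OF vr0 S2] suminf_ennreal2[OF vw0 S1] .
  then have eq: "(\<Sum>i. v i * r i) = (\<Sum>j. v j * w j)"
    using suminf_nonneg[OF S1 vw0] suminf_nonneg[OF S2 vr0] by (simp only: ennreal_inj)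
  have "(\<lambda>i. v i * r i) sums (\<Sum>j. v j * w j)" unfolding eq[symmetric] by (rule summable_sums[OF S2])
  then show "(\<lambda>i. v i * (\<Sum>j. Mij P i j * w j)) sums (\<Sum>j. v j * w j)"
    unfolding r_def .
qed

lemma one_minus_pow_strict:
  fixes x :: real
  assumes "0 \<le> x" "x < 1" "k \<ge> 2"
  shows "1 - x ^ k < real k * (1 - x)"
proof -
  have "1 - x ^ Suc (Suc m) < real (Suc (Suc m)) * (1 - x)" for m
  proof (induction m)
    case 0
    have "1 - x ^ 2 = (1 - x) + x * (1 - x)" by (simp add: algebra_simps power2_eq_square)
    also have "\<dots> < (1 - x) + 1 * (1 - x)" using assms by (intro add_strict_left_mono mult_strict_right_mono) auto
    finally show ?case by (simp add: numeral_2_eq_2)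
  next
    case (Suc m)
    have "1 - x ^ Suc (Suc (Suc m)) = (1 - x ^ Suc (Suc m)) + x ^ Suc (Suc m) * (1 - x)" by (simp add: algebra_simps)
    also have "\<dots> < real (Suc (Suc m)) * (1 - x) + 1 * (1 - x)"
    proof (rule add_less_le_mono[OF Suc mult_right_mono])
      show "x ^ Suc (Suc m) \<le> 1" using assms by (intro power_le_one) auto
    qed (use assms in auto)
    finally show ?case by (simp add: algebra_simps)
  qed
  moreover obtain m where "k = Suc (Suc m)" using assms(3) by (metis add_2_eq_Suc le_Suc_ex)
  ultimately show ?thesis by blast
qed

lemma one_minus_prod_two:
  fixes a :: "nat \<Rightarrow> real"
  assumes "finite A" "\<And>j. j \<in> A \<Longrightarrow> 0 \<le> a j \<and> a j \<le> 1" "j1 \<in> A" "j2 \<in> A" "j1 \<noteq> j2"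
  shows "1 - (\<Prod>j\<in>A. a j) \<le> (\<Sum>j\<in>A. 1 - a j) - (1 - a j1) * (1 - a j2)"
proof -
  define R where "R = A - {j1, j2}"
  have A: "A = insert j1 (insert j2 R)" "j1 \<notin> insert j2 R" "j2 \<notin> R" "finite R"
    using assms unfolding R_def by auto
  have pr: "(\<Prod>j\<in>A. a j) = a j1 * (a j2 * (\<Prod>j\<in>R. a j))" using A by simp
  have sm: "(\<Sum>j\<in>A. 1 - a j) = (1 - a j1) + ((1 - a j2) + (\<Sum>j\<in>R. 1 - a j))" using A by simp
  have R1: "1 - (\<Prod>j\<in>R. a j) \<le> (\<Sum>j\<in>R. 1 - a j)"
    by (rule one_minus_prod_le[OF A(4)]) (use assms A in auto)
  have X: "0 \<le> (\<Prod>j\<in>R. a j)" "(\<Prod>j\<in>R. a j) \<le> 1" using assms A by (auto intro!: prod_nonneg prod_le_1)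
  have a1: "0 \<le> a j1" "a j1 \<le> 1" and a2: "0 \<le> a j2" "a j2 \<le> 1" using assms by auto
  have "a j1 * a j2 * (1 - (\<Prod>j\<in>R. a j)) \<le> 1 * (1 - (\<Prod>j\<in>R. a j))"
    using a1 a2 X by (intro mult_right_mono) (auto simp: mult_le_one)
  then show ?thesis unfolding pr sm using R1 by (simp add: algebra_simps)
qed



lemma supp_pos: "k \<in> supp z \<Longrightarrow> z k \<ge> 1"
  by (simp add: supp_def)

lemma tot_le1:
  fixes q :: "nat \<Rightarrow> real"
  assumes f: "finite (supp z)" and q: "\<And>k. 0 < q k \<and> q k \<le> 1"
    and T: "(\<Sum>k\<in>supp z. real (z k) * q k) = 1 - (\<Prod>k\<in>supp z. (1 - q k) ^ z k)"
  shows "tot z \<le> 1"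
proof (rule ccontr)
  assume "\<not> tot z \<le> 1"
  then have t2: "tot z \<ge> 2" by simp
  let ?a = "\<lambda>k. (1 - q k) ^ z k"
  have a01: "0 \<le> ?a k \<and> ?a k \<le> 1" for k
  proof -
    have "0 \<le> 1 - q k" "1 - q k \<le> 1" using q[of k] by auto
    then show ?thesis by (simp add: power_le_one)
  qed
  have P1: "1 - (\<Prod>k\<in>supp z. ?a k) \<le> (\<Sum>k\<in>supp z. 1 - ?a k)"
    by (rule one_minus_prod_le[OF f]) (use a01 in auto)
  have le: "1 - ?a k \<le> real (z k) * q k" for k
    using one_minus_pow_le(2)[of "1 - q k" "z k"] q[of k] by simp
  show False
  proof (cases "\<exists>k\<in>supp z. z k \<ge> 2")
    case True
    then obtain k where k: "k \<in> supp z" "z k \<ge> 2" by blast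
    have "1 - ?a k < real (z k) * q k"
      using one_minus_pow_strict[of "1 - q k" "z k"] q[of k] k by simp
    then have "(\<Sum>k\<in>supp z. 1 - ?a k) < (\<Sum>k\<in>supp z. real (z k) * q k)"
      using k(1) le by (intro sum_strict_mono_ex1[OF f]) auto
    then show False using P1 T by simp
  next
    case False
    then have z1: "\<And>k. k \<in> supp z \<Longrightarrow> z k = 1" using supp_pos by fastforce
    have "tot z = card (supp z)" unfolding tot_def using z1 by simp
    then have c2: "card (supp z) \<ge> 2" using t2 by simp
    then obtain k1 where k1: "k1 \<in> supp z" by fastforce
    have "card (supp z - {k1}) \<ge> 1" using c2 k1 f by simp
    then have "supp z - {k1} \<noteq> {}" by (metis card.empty not_one_le_zero)
    then obtain k2 where k2: "k2 \<in> supp z - {k1}" by blast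
    have "1 - (\<Prod>k\<in>supp z. ?a k) \<le> (\<Sum>k\<in>supp z. 1 - ?a k) - (1 - ?a k1) * (1 - ?a k2)"
      by (rule one_minus_prod_two[OF f]) (use a01 k1 k2 in auto)
    moreover have "(1 - ?a k1) * (1 - ?a k2) > 0" using z1[OF k1] z1[of k2] k2 q[of k1] q[of k2] by simp
    moreover have "(\<Sum>k\<in>supp z. 1 - ?a k) \<le> (\<Sum>k\<in>supp z. real (z k) * q k)"
      by (rule sum_mono) (rule le)
    ultimately show False using T by simp
  qed
qed

lemma tot_one:
  assumes f: "finite (supp z)" and t: "tot z = 1"
  shows "\<exists>k. supp z = {k} \<and> z k = 1"
proof -
  have ne: "supp z \<noteq> {}" using t by (auto simp: tot_def)
  then obtain k where k: "k \<in> supp z" by blast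
  have zk: "z k = 1" using le_tot[OF f, of k] supp_pos[OF k] t by simp
  have "supp z = {k}"
  proof (rule ccontr)
    assume "supp z \<noteq> {k}"
    then obtain k2 where k2: "k2 \<in> supp z" "k2 \<noteq> k" using k by blast
    have "(\<Sum>j\<in>{k, k2}. z j) \<le> tot z" unfolding tot_def using k k2 f by (intro sum_mono2) auto
    then show False using zk supp_pos[OF k2(1)] k2 t by simp
  qed
  then show ?thesis using zk by blast
qed

lemma Mpow_bound:
  fixes q :: "nat \<Rightarrow> real"
  assumes E: "\<And>i. ennreal (q i) = (\<Sum>k. Menn P i k * ennreal (q k))"
  shows "Mpow P n i j * ennreal (q j) \<le> ennreal (q i)"
proof (induction n arbitrary: i)
  case 0 then show ?case by simp
next
  case (Suc n)
  have "Mpow P (Suc n) i j * ennreal (q j) = (\<Sum>k. Menn P i k * (Mpow P n k j * ennreal (q j)))"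
    by (simp only: Mpow.simps ennreal_suminf_multc[symmetric] mult.assoc)
  also have "\<dots> \<le> (\<Sum>k. Menn P i k * ennreal (q k))"
    by (rule suminf_le[OF _ summableI summableI]) (rule mult_left_mono[OF Suc], simp)
  also have "\<dots> = ennreal (q i)" by (rule E[symmetric])
  finally show ?case .
qed



lemma M1_v:
  assumes "M1 P"
  shows "\<exists>v. (\<forall>j. v j > 0) \<and> left_eigen P v \<and> v sums 1"
proof -
  have "\<exists>v u. (\<forall>j. v j > 0) \<and> (\<forall>j. u j > 0) \<and> left_eigen P v \<and> right_eigen P u
        \<and> (\<lambda>j. v j * u j) sums 1
        \<and> v sums 1 \<and> bdd_above (range u)" using assms unfolding M1_def by (elim conjE)
  then show ?thesis by blast
qed

lemma M1_irr: "M1 P \<Longrightarrow> irreducible_M P"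
  by (simp add: M1_def)

lemma sums_zero_nonneg:
  fixes f :: "nat \<Rightarrow> real"
  assumes "f sums 0" "\<And>i. 0 \<le> f i"
  shows "f i = 0"
  using suminf_eq_zero_iff[of f] assms by (auto simp: sums_iff)

lemma fixed_point_one2:
  assumes G: "GWBP P" and M: "M1 P" and NL: "\<not> F_linear P"
    and p: "p \<in> unit_cube" and fp: "\<And>i. genF P i p = p i"
  shows "p j0 = 1"
proof (rule ccontr)
  assume pj0: "p j0 \<noteq> 1"
  define q where "q k = 1 - p k" for k
  have q01: "0 \<le> q k \<and> q k \<le> 1" for k using cube_le[OF p, of k] by (simp add: q_def)
  have qj0: "q j0 > 0" using pj0 cube_le[OF p, of j0] by (simp add: q_def)
  obtain v where v: "\<And>j. v j > 0" "left_eigen P v" "v sums 1" using M1_v[OF M] by blast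
  have fin: "\<And>i. Mtot_enn P i < \<infinity>" by (rule M1_fin[OF M])
  define T where "T z = (\<Sum>k\<in>supp z. real (z k) * q k) - (1 - (\<Prod>k\<in>supp z. p k ^ z k))" for z
  define r where "r i = (\<Sum>k. Mij P i k * q k)" for i
  have T0: "0 \<le> T z" if "finite (supp z)" for z
  proof -
    have "1 - (\<Prod>k\<in>supp z. p k ^ z k) \<le> (\<Sum>k\<in>supp z. 1 - p k ^ z k)"
      by (rule one_minus_prod_le[OF that]) (use cube_le[OF p] in \<open>auto intro: power_le_one\<close>)
    also have "\<dots> \<le> (\<Sum>k\<in>supp z. real (z k) * q k)"
      by (rule sum_mono) (use one_minus_pow_le(2) cube_le[OF p] in \<open>auto simp: q_def\<close>)
    finally show ?thesis unfolding T_def by simp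
  qed
  have rT: "r i - q i = (\<integral>z. T z \<partial>P i)" and IT: "integrable (measure_pmf (P i)) T" for i
  proof -
    have A: "(\<lambda>k. Mij P i k * q k) sums (\<integral>z. (\<Sum>k\<in>supp z. real (z k) * q k) \<partial>P i)"
      by (rule Mw_sums[OF G fin q01])
    have IA: "integrable (measure_pmf (P i)) (\<lambda>z. \<Sum>k\<in>supp z. real (z k) * q k)"
      by (rule SX(3)[OF G fin, of 1]) (use q01 in \<open>auto intro: mult_left_le\<close>)
    have I1: "integrable (measure_pmf (P i)) (\<lambda>z. 1 - (\<Prod>k\<in>supp z. p k ^ z k))"
      using prodz_integrable[OF p] by simp
    have qi: "q i = (\<integral>z. 1 - (\<Prod>k\<in>supp z. p k ^ z k) \<partial>P i)"
      unfolding q_def fp[of i, symmetric] genF_def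
      by (subst Bochner_Integration.integral_diff[OF _ prodz_integrable[OF p]]) auto
    show "r i - q i = (\<integral>z. T z \<partial>P i)"
      unfolding r_def qi sums_unique[OF A, symmetric] T_def
      by (rule Bochner_Integration.integral_diff[OF IA I1, symmetric])
    show "integrable (measure_pmf (P i)) T" unfolding T_def using IA I1 by simp
  qed
  have rq0: "0 \<le> r i - q i" for i
    unfolding rT by (rule integral_nonneg_AE, rule AE_pmfI) (use T0 supp_finite[OF G] in auto)
  have S: "(\<lambda>i. v i * r i) sums (\<Sum>j. v j * q j)" and Sq: "summable (\<lambda>j. v j * q j)"
    using vM[OF G fin v(2) v(1) v(3) q01] unfolding r_def by auto
  have "(\<lambda>i. v i * r i - v i * q i) sums ((\<Sum>j. v j * q j) - (\<Sum>j. v j * q j))"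
    by (rule sums_diff[OF S summable_sums[OF Sq]])
  then have "(\<lambda>i. v i * (r i - q i)) sums 0" by (simp add: algebra_simps)
  then have "v i * (r i - q i) = 0" for i
    by (rule sums_zero_nonneg) (rule mult_nonneg_nonneg[OF less_imp_le[OF v(1)] rq0])
  then have rq: "r i = q i" for i using v(1)[of i] by (metis less_irrefl mult_eq_0_iff right_minus_eq)
  have Tz: "T z = 0" if z: "z \<in> set_pmf (P i)" for i z
  proof -
    have "(\<integral>z. T z \<partial>P i) = 0" using rT[of i] rq[of i] by simp
    then have "AE z in measure_pmf (P i). T z = 0"
      using integral_nonneg_eq_0_iff_AE[OF IT] T0 supp_finite[OF G] by (auto simp: AE_measure_pmf_iff)
    then show ?thesis using z by (simp add: AE_measure_pmf_iff)
  qed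
  have E: "ennreal (q i) = (\<Sum>k. Menn P i k * ennreal (q k))" for i
  proof -
    have A: "(\<lambda>k. Mij P i k * q k) sums r i"
      using Mw_sums[OF G fin q01] unfolding r_def by (simp add: sums_iff)
    have nn: "0 \<le> Mij P i k * q k" for k using Mij_nonneg[of P i k] q01[of k] by simp
    have "ennreal (q i) = ennreal (r i)" using rq by simp
    also have "\<dots> = (\<Sum>k. ennreal (Mij P i k * q k))"
      using suminf_ennreal2[of "\<lambda>k. Mij P i k * q k", OF nn] A by (simp add: sums_iff)
    also have "\<dots> = (\<Sum>k. Menn P i k * ennreal (q k))"
    proof (rule arg_cong[where f=suminf], rule ext)
      fix k
      show "ennreal (Mij P i k * q k) = Menn P i k * ennreal (q k)"
        using Mij_int(2)[OF G fin, of i k] Mij_nonneg[of P i k] q01[of k] by (simp add: ennreal_mult)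
    qed
    finally show ?thesis .
  qed
  have qpos: "q i > 0" for i
  proof -
    obtain n where "Mpow P n i j0 > 0" using M1_irr[OF M] unfolding irreducible_M_def by blast
    then have "0 < Mpow P n i j0 * ennreal (q j0)" using qj0 by (simp add: ennreal_zero_less_mult_iff)
    also have "\<dots> \<le> ennreal (q i)" by (rule Mpow_bound[OF E])
    finally show ?thesis by simp
  qed
  have tot1: "tot z \<le> 1" if z: "z \<in> set_pmf (P i)" for i z
  proof (rule tot_le1[OF supp_finite[OF G z]])
    show "\<And>k. 0 < q k \<and> q k \<le> 1" using qpos q01 by auto
    show "(\<Sum>k\<in>supp z. real (z k) * q k) = 1 - (\<Prod>k\<in>supp z. (1 - q k) ^ z k)"
      using Tz[OF z] unfolding T_def q_def by simp
  qed
  have Mle: "Mtot P i \<le> 1" for i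
  proof -
    have "Mtot P i = (\<integral>z. real (tot z) \<partial>P i)" by (rule tot_integrable(2)[OF fin])
    also have "\<dots> \<le> (\<integral>z. 1 \<partial>P i)"
      by (rule integral_mono_AE[OF tot_integrable(1)[OF fin]], simp, rule AE_pmfI) (use tot1 in auto)
    finally show ?thesis by simp
  qed
  have w1: "\<And>j. 0 \<le> (1::real) \<and> (1::real) \<le> 1" by simp
  have S1: "(\<lambda>i. v i * (\<Sum>k. Mij P i k * 1)) sums (\<Sum>j. v j * 1)"
    by (rule vM(1)[OF G fin v(2) v(1) v(3) w1])
  have "(\<lambda>i. v i * Mtot P i) sums 1"
    using S1 sums_unique[OF Msums[OF G fin]] sums_unique[OF v(3)] by simp
  then have "(\<lambda>i. v i - v i * Mtot P i) sums (1 - 1)" by (rule sums_diff[OF v(3)])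
  then have "(\<lambda>i. v i * (1 - Mtot P i)) sums 0" by (simp add: algebra_simps)
  then have "v i * (1 - Mtot P i) = 0" for i
    by (rule sums_zero_nonneg) (rule mult_nonneg_nonneg[OF less_imp_le[OF v(1)]], simp add: Mle)
  then have M1i: "Mtot P i = 1" for i using v(1)[of i] by (metis less_irrefl mult_eq_0_iff right_minus_eq)
  have tot_eq: "tot z = 1" if z: "z \<in> set_pmf (P i)" for i z
  proof -
    have I: "integrable (measure_pmf (P i)) (\<lambda>z. 1 - real (tot z))"
      using tot_integrable(1)[OF fin] by simp
    have "(\<integral>z. 1 - real (tot z) \<partial>P i) = 1 - Mtot P i"
      using tot_integrable[OF fin, of i] by (subst Bochner_Integration.integral_diff) auto
    then have "(\<integral>z. 1 - real (tot z) \<partial>P i) = 0" using M1i by simp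
    then have "AE z in measure_pmf (P i). 1 - real (tot z) = 0"
      using integral_nonneg_eq_0_iff_AE[OF I] tot1 by (auto simp: AE_measure_pmf_iff)
    then show ?thesis using z by (simp add: AE_measure_pmf_iff)
  qed
  have "F_linear P" unfolding F_linear_def
  proof (intro allI ballI)
    fix i s assume s: "s \<in> unit_cube"
    have A: "(\<lambda>k. Mij P i k * s k) sums (\<integral>z. (\<Sum>k\<in>supp z. real (z k) * s k) \<partial>P i)"
      by (rule Mw_sums[OF G fin]) (use cube_le[OF s] in auto)
    have "genF P i s = (\<integral>z. (\<Sum>k\<in>supp z. real (z k) * s k) \<partial>P i)"
      unfolding genF_def
    proof (rule integral_cong_AE, simp, simp, rule AE_pmfI)
      fix z assume z: "z \<in> set_pmf (P i)"
      obtain k where k: "supp z = {k}" "z k = 1" using tot_one[OF supp_finite[OF G z] tot_eq[OF z]] by blast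
      show "(\<Prod>j\<in>supp z. s j ^ z j) = (\<Sum>k\<in>supp z. real (z k) * s k)" using k by simp
    qed
    then show "genF P i s = (\<Sum>j. Mij P i j * s j)" using sums_unique[OF A] by simp
  qed
  then show False using NL by simp
qed



lemma a_mono: "genFn P n (\<lambda>_. 0) j \<le> genFn P (Suc n) (\<lambda>_. 0) j"
proof (induction n arbitrary: j)
  case 0 then show ?case using genF_bounds(1)[OF zero_cube] by simp
next
  case (Suc n)
  show ?case using genF_mono[OF genFn_cube[OF zero_cube] genFn_cube[OF zero_cube] Suc] by simp
qed

lemma a_lim:
  "(\<lambda>n. genFn P n (\<lambda>_. 0) j) \<longlonglongrightarrow> (SUP n. genFn P n (\<lambda>_. 0) j)"
proof (rule LIMSEQ_incseq_SUP)
  show "bdd_above (range (\<lambda>n. genFn P n (\<lambda>_. 0) j))"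
    using cube_le[OF genFn_cube[OF zero_cube]] by (intro bdd_aboveI[where M=1]) auto
  show "incseq (\<lambda>n. genFn P n (\<lambda>_. 0) j)" by (rule incseq_SucI) (rule a_mono)
qed

lemma limit_fixed:
  fixes P :: offspring
  defines "p \<equiv> (\<lambda>j. SUP n. genFn P n (\<lambda>_. 0) j)"
  shows "p \<in> unit_cube" and "\<And>i. genF P i p = p i"
proof -
  let ?a = "\<lambda>n. genFn P n (\<lambda>_. 0)"
  have L: "\<And>j. (\<lambda>n. ?a n j) \<longlonglongrightarrow> p j" unfolding p_def by (rule a_lim)
  have ac: "\<And>n. ?a n \<in> unit_cube" by (rule genFn_cube[OF zero_cube])
  show pc: "p \<in> unit_cube" unfolding unit_cube_def
  proof (intro CollectI allI conjI)
    fix j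
    show "0 \<le> p j" by (rule LIMSEQ_le_const[OF L[of j]]) (use cube_le[OF ac] in auto)
    show "p j \<le> 1" by (rule LIMSEQ_le_const2[OF L[of j]]) (use cube_le[OF ac] in auto)
  qed
  fix i
  have "(\<lambda>n. genF P i (?a n)) \<longlonglongrightarrow> genF P i p"
    unfolding genF_def
  proof (rule integral_dominated_convergence[where w="\<lambda>_. 1"])
    show "AE z in measure_pmf (P i). (\<lambda>n. \<Prod>j\<in>supp z. ?a n j ^ z j) \<longlonglongrightarrow> (\<Prod>j\<in>supp z. p j ^ z j)"
      by (intro AE_I2 tendsto_prod tendsto_power L)
    show "\<And>n. AE z in measure_pmf (P i). norm (\<Prod>j\<in>supp z. ?a n j ^ z j) \<le> 1"
      using prodz_bounds[OF ac] by auto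
  qed simp_all
  moreover have "(\<lambda>n. genF P i (?a n)) \<longlonglongrightarrow> p i"
    using LIMSEQ_Suc[OF L[of i]] by simp
  ultimately show "genF P i p = p i" by (rule LIMSEQ_unique)
qed

lemma pointwise:
  assumes G: "GWBP P" and M: "M1 P" and NL: "\<not> F_linear P"
  shows "(\<lambda>n. genFn P n (\<lambda>_. 0) j) \<longlonglongrightarrow> 1"
  using a_lim[of P j] fixed_point_one2[OF G M NL limit_fixed] by simp



lemma unif_ext:
  assumes G: "GWBP P" and M: "M1 P" and NL: "\<not> F_linear P" and e: "e > 0"
  shows "\<exists>N. \<forall>n\<ge>N. \<forall>i. 1 - genFn P n (\<lambda>_. 0) i \<le> e"
proof -
  obtain B where B: "\<And>i. Mtot P i \<le> B" using Mtot_bdd[OF G M] by blast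
  define B1 where "B1 = \<bar>B\<bar> + 1"
  have B1: "B1 > 0" "\<And>i. Mtot P i \<le> B1" unfolding B1_def using B by (auto intro: order_trans[OF B[of _]] simp: abs_if)
  define \<eta> where "\<eta> = e / (2 * B1)"
  have eta: "\<eta> > 0" using e B1 by (simp add: \<eta>_def)
  obtain N where N: "\<And>i. (\<Sum>k. Mij P i (k + N + 1)) / Mtot P i \<le> \<eta>" using M1_tail[OF M eta] by auto
  let ?a = "\<lambda>n. genFn P n (\<lambda>_. 0)"
  have ev: "\<forall>j\<in>{..N}. eventually (\<lambda>n. 1 - \<eta> < ?a n j) sequentially"
  proof
    fix j :: nat
    have "1 - \<eta> < 1" using eta by simp
    then show "eventually (\<lambda>n. 1 - \<eta> < ?a n j) sequentially"
      by (rule order_tendstoD(1)[OF pointwise[OF G M NL]])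
  qed
  have "eventually (\<lambda>n. \<forall>j\<in>{..N}. 1 - \<eta> < ?a n j) sequentially"
    by (rule eventually_ball_finite[OF _ ev]) simp
  then obtain n0 where n0: "\<And>n j. n \<ge> n0 \<Longrightarrow> j \<le> N \<Longrightarrow> 1 - \<eta> < ?a n j"
    unfolding eventually_sequentially by auto
  show ?thesis
  proof (intro exI[of _ "Suc n0"] allI impI)
    fix n i assume n: "Suc n0 \<le> n"
    then obtain m where m: "n = Suc m" "m \<ge> n0" by (cases n) auto
    have ac: "?a m \<in> unit_cube" by (rule genFn_cube[OF zero_cube])
    have "1 - ?a n i = 1 - genF P i (?a m)" using m by simp
    also have "\<dots> \<le> (\<Sum>j. Mij P i j * (1 - ?a m j))"
      by (rule one_minus_genF_le[OF G M1_fin[OF M] ac])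
    also have "\<dots> \<le> Mtot P i * (\<eta> + \<eta>)"
    proof (rule tail_bound[OF G M1_fin[OF M] _ N])
      show "\<And>j. 0 \<le> 1 - ?a m j \<and> 1 - ?a m j \<le> 1" using cube_le[OF ac] by auto
      show "\<And>j. j \<le> N \<Longrightarrow> 1 - ?a m j \<le> \<eta>" using n0 m by fastforce
    qed (use eta in auto)
    also have "\<dots> \<le> B1 * (\<eta> + \<eta>)" using B1 eta by (intro mult_right_mono) auto
    also have "\<dots> = e" using B1 by (simp add: \<eta>_def field_simps)
    finally show "1 - ?a n i \<le> e" .
  qed
qed

theorem lemma7:
  fixes P :: offspring
  assumes "GWBP P" and "M1 P" and "\<not> F_linear P"
  shows "(\<forall>e>0. \<exists>d>0. \<forall>s\<in>Sset. norm_inf s < d \<longrightarrow>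
            (\<forall>i. \<bar>eps2 P i s\<bar> / norm_inf s \<le> e))
       \<and> (\<forall>e>0. \<exists>N. \<forall>n\<ge>N. \<forall>s\<in>Sset. \<forall>i.
            \<bar>eps2 P i (genFn P (n - 1) s)\<bar> / calQ P (n - 1) s \<le> e)"
proof (intro conjI allI impI)
  fix e :: real assume e: "e > 0"
  obtain d where d: "d > 0" "\<And>s i. s \<in> unit_cube \<Longrightarrow> norm_inf s < d \<Longrightarrow> \<bar>eps2 P i s\<bar> \<le> e * norm_inf s"
    using part1[OF assms(1,2) e] by blast
  show "\<exists>d>0. \<forall>s\<in>Sset. norm_inf s < d \<longrightarrow> (\<forall>i. \<bar>eps2 P i s\<bar> / norm_inf s \<le> e)"
  proof (intro exI[of _ d] conjI ballI impI allI d)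
    fix s i assume s: "s \<in> Sset" and sd: "norm_inf s < d"
    have c: "s \<in> unit_cube" using s by (simp add: Sset_def)
    have p: "0 < norm_inf s" by (rule norm_inf_pos[OF s])
    show "\<bar>eps2 P i s\<bar> / norm_inf s \<le> e" using d(2)[OF c sd, of i] p by (simp add: divide_le_eq)
  qed
next
  fix e :: real assume e: "e > 0"
  obtain d where d: "d > 0" "\<And>s i. s \<in> unit_cube \<Longrightarrow> norm_inf s < d \<Longrightarrow> \<bar>eps2 P i s\<bar> \<le> e * norm_inf s"
    using part1[OF assms(1,2) e] by blast
  obtain N where N: "\<And>n i. n \<ge> N \<Longrightarrow> 1 - genFn P n (\<lambda>_. 0) i \<le> d / 2"
    using unif_ext[OF assms, of "d/2"] d(1) by auto
  show "\<exists>N. \<forall>n\<ge>N. \<forall>s\<in>Sset. \<forall>i. \<bar>eps2 P i (genFn P (n - 1) s)\<bar> / calQ P (n - 1) s \<le> e"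
  proof (intro exI[of _ "N + 1"] allI impI ballI)
    fix n s i assume n: "N + 1 \<le> n" and s: "s \<in> Sset"
    have c: "s \<in> unit_cube" using s by (simp add: Sset_def)
    let ?t = "genFn P (n - 1) s"
    have tc: "?t \<in> unit_cube" by (rule genFn_cube[OF c])
    have eq: "norm_inf ?t = calQ P (n - 1) s" by (simp add: norm_inf_def calQ_def Qn_def)
    have "norm_inf ?t \<le> d / 2" unfolding norm_inf_def
    proof (rule cSUP_least)
      fix j
      have "genFn P (n - 1) (\<lambda>_. 0) j \<le> ?t j"
        by (rule genFn_mono[OF zero_cube c]) (use cube_le[OF c] in auto)
      moreover have "1 - genFn P (n - 1) (\<lambda>_. 0) j \<le> d / 2" using N[of "n - 1" j] n by simp
      ultimately show "1 - ?t j \<le> d / 2" by linarith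
    qed simp
    then have lt: "norm_inf ?t < d" using d(1) by simp
    have b: "\<bar>eps2 P i ?t\<bar> \<le> e * norm_inf ?t" by (rule d(2)[OF tc lt])
    show "\<bar>eps2 P i ?t\<bar> / calQ P (n - 1) s \<le> e"
    proof (cases "norm_inf ?t = 0")
      case True then show ?thesis using e eq by simp
    next
      case False
      then have "0 < norm_inf ?t" using norm_inf_props(2)[OF tc] by simp
      then show ?thesis using b eq by (simp add: divide_le_eq mult.commute)
    qed
  qed
qed


end
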